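(* Let $(Z,M,\mu)$ be a measure space with a non-trivial atomless measure $\mu$, and let $1 < a < b \le 2$. Let $\psi:(a,b)\to(0,\infty]$ be a generating function with $\inf_{p\in(a,b)}\psi(p)>0$, and let $G\psi = G\psi[a,b]$ be the associated Grand Lebesgue Space with norm $\|f\|G\psi = \sup_{p\in(a,b)} \|f\|_p/\psi(p)$. For $u\in G\psi$ put $$\kappa[G\psi[a,b]](u) := \inf_{p\in(a,b)} \frac{\|u\|_p^2}{\psi^2(p)}.$$ Then for all $x,y$ in the closed unit ball $B[G\psi[a,b]] = \{f\in G\psi: \|f\|G\psi\le 1\}$, $$\|x+y\|G\psi \le 2 - \frac{a-1}{4}\,\kappa[G\psi[a,b]](x-y).$$
   Context: For a measurable $f:Z\to\mathbb{R}$ and $1\le p<\infty$, $\|f\|_p = \left(\int_Z |f(z)|^p\,\mu(dz)\right)^{1/p}$. Given $1\le a<b\le\infty$ and a function $\psi:(a,b)\to(0,\infty]$ (possibly infinite at some points) with $\inf_{p\in(a,b)}\psi(p)>0$, the Grand Lebesgue Space $G\psi[a,b]$ consists of all real measurable functions $f$ on $Z$ with finite norm $\|f\|G\psi[a,b] := \sup_{p\in(a,b)} \|f\|_p/\psi(p)$, using the convention $C/\infty := 0$. *)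

theory Defs
  imports "HOL-Analysis.Analysis"
begin

definition Lp_norm :: "'a measure \<Rightarrow> real \<Rightarrow> ('a \<Rightarrow> real) \<Rightarrow> ennreal" where
  "Lp_norm M p f =
     (let I = (\<integral>\<^sup>+ z. ennreal (\<bar>f z\<bar> powr p) \<partial>M)
      in if I = \<infinity> then \<infinity> else ennreal ((enn2real I) powr (1 / p)))"

text \<open>Grand Lebesgue norm; ennreal division gives C / \<infinity> = 0.\<close>
definition GLS_norm :: "'a measure \<Rightarrow> real \<Rightarrow> real \<Rightarrow> (real \<Rightarrow> ennreal) \<Rightarrow> ('a \<Rightarrow> real) \<Rightarrow> ennreal" where
  "GLS_norm M a b \<psi> f = (SUP p\<in>{a<..<b}. Lp_norm M p f / \<psi> p)"

definition GLS :: "'a measure \<Rightarrow> real \<Rightarrow> real \<Rightarrow> (real \<Rightarrow> ennreal) \<Rightarrow> ('a \<Rightarrow> real) set" where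
  "GLS M a b \<psi> = {f. f \<in> borel_measurable M \<and> GLS_norm M a b \<psi> f < \<infinity>}"

definition GLS_kappa :: "'a measure \<Rightarrow> real \<Rightarrow> real \<Rightarrow> (real \<Rightarrow> ennreal) \<Rightarrow> ('a \<Rightarrow> real) \<Rightarrow> ennreal" where
  "GLS_kappa M a b \<psi> u = (INF p\<in>{a<..<b}. (Lp_norm M p u)\<^sup>2 / (\<psi> p)\<^sup>2)"

definition atomless :: "'a measure \<Rightarrow> bool" where
  "atomless M \<longleftrightarrow> (\<forall>A\<in>sets M. 0 < emeasure M A \<longrightarrow>
      (\<exists>B\<in>sets M. B \<subseteq> A \<and> 0 < emeasure M B \<and> emeasure M B < emeasure M A))"

end

theory Submission
  imports Defs "HOL-Analysis.Analysis"
begin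


lemma bern_le:
  fixes x r :: real
  assumes "0 \<le> r" "r \<le> 1" "0 \<le> x"
  shows "x powr r \<le> 1 + r * (x - 1)"
proof (cases "x = 0")
  case True then show ?thesis using assms by simp
next
  case False
  then have "x powr r * 1 powr (1 - r) \<le> r * x + (1 - r) * 1"
    using assms by (intro Youngs_inequality_0) auto
  then show ?thesis by (simp add: algebra_simps)
qed

lemma bern_ge:
  fixes x p :: real
  assumes "1 \<le> p" "0 \<le> x"
  shows "1 + p * (x - 1) \<le> x powr p"
proof (cases "x = 0")
  case True then show ?thesis using assms by simp
next
  case False
  have "(x powr p) powr (1/p) * 1 powr (1 - 1/p) \<le> (1/p) * x powr p + (1 - 1/p) * 1"
    using assms False by (intro Youngs_inequality_0) auto
  moreover have "(x powr p) powr (1/p) = x" using assms False by (simp add: powr_powr)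
  ultimately have "x \<le> (1/p) * x powr p + (1 - 1/p)" by simp
  then have "p * x \<le> p * ((1/p) * x powr p + (1 - 1/p))" using assms by simp
  also have "\<dots> = x powr p + p - 1" using assms by (simp add: algebra_simps)
  finally show ?thesis by (simp add: algebra_simps)
qed

lemma bern_neg:
  fixes x k :: real
  assumes "k \<le> 0" "-1 \<le> k" "0 < x"
  shows "1 + k * (x - 1) \<le> x powr k"
proof -
  have m: "x powr (-k) \<le> 1 + (-k) * (x - 1)" using assms by (intro bern_le) auto
  have pos: "0 < x powr (-k)" using assms by simp
  have d: "0 < 1 + (-k) * (x - 1)" using m pos by linarith
  have "x powr k = 1 / x powr (-k)" using assms by (simp add: powr_minus_divide)
  moreover have "1 + k * (x - 1) \<le> 1 / (1 + (-k) * (x - 1))"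
  proof -
    define z where "z = k * (x - 1)"
    have e: "(1 + z) * (1 - z) = 1 - z^2" by (simp add: power2_eq_square algebra_simps)
    have "(1 + z) * (1 - z) \<le> 1" unfolding e by simp
    then have "(1 + k * (x - 1)) * (1 + (-k) * (x - 1)) \<le> 1" by (simp add: z_def)
    then show ?thesis using d by (simp add: field_simps)
  qed
  moreover have "1 / (1 + (-k) * (x - 1)) \<le> 1 / x powr (-k)"
    using m pos d by (intro divide_left_mono) (auto intro!: mult_pos_pos)
  ultimately show ?thesis by linarith
qed

lemma deriv_plus:
  fixes u e :: real
  assumes "-1 < u"
  shows "DERIV (\<lambda>u. (1 + u) powr e) u :> e * (1 + u) powr (e - 1)"
proof -
  have "DERIV (\<lambda>u. (1 + u) powr e) u :> e * (1 + u) powr (e - of_nat 1) * 1"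
    by (rule DERIV_fun_powr) (use assms in \<open>auto intro!: derivative_eq_intros\<close>)
  then show ?thesis by simp
qed

lemma deriv_minus:
  fixes u e :: real
  assumes "u < 1"
  shows "DERIV (\<lambda>u. (1 - u) powr e) u :> - (e * (1 - u) powr (e - 1))"
proof -
  have "DERIV (\<lambda>u. (1 - u) powr e) u :> e * (1 - u) powr (e - of_nat 1) * (-1)"
    by (rule DERIV_fun_powr) (use assms in \<open>auto intro!: derivative_eq_intros\<close>)
  then show ?thesis by simp
qed

lemma phi_nonneg:
  fixes p s :: real
  assumes p: "1 \<le> p" "p \<le> 2" and s: "0 \<le> s" "s < 1"
  shows "2 * (p - 1) * s \<le> (1 + s) powr (p - 1) - (1 - s) powr (p - 1)"
proof -
  define f where "f u = (1 + u) powr (p - 1) - (1 - u) powr (p - 1) - 2 * (p - 1) * u" for u :: real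
  have "f 0 \<le> f s"
  proof (rule DERIV_nonneg_imp_nondecreasing[OF s(1)])
    fix u assume u: "0 \<le> u" "u \<le> s"
    have d: "DERIV f u :> (p - 1) * (1 + u) powr (p - 1 - 1) - (- ((p - 1) * (1 - u) powr (p - 1 - 1))) - 2 * (p - 1) * 1"
      unfolding f_def using u s
      by (intro DERIV_diff deriv_plus deriv_minus DERIV_cmult DERIV_ident) auto
    have "2 \<le> (1 + u) powr (p - 2) + (1 - u) powr (p - 2)"
    proof -
      have "1 + (p - 2) * ((1 + u) - 1) \<le> (1 + u) powr (p - 2)" using p u by (intro bern_neg) auto
      moreover have "1 + (p - 2) * ((1 - u) - 1) \<le> (1 - u) powr (p - 2)" using p u s by (intro bern_neg) auto
      ultimately show ?thesis by (simp add: algebra_simps)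
    qed
    then have "0 \<le> (p - 1) * ((1 + u) powr (p - 2) + (1 - u) powr (p - 2) - 2)" using p by simp
    then have "0 \<le> (p - 1) * (1 + u) powr (p - 1 - 1) - (- ((p - 1) * (1 - u) powr (p - 1 - 1))) - 2 * (p - 1) * 1"
      by (simp add: algebra_simps)
    with d show "\<exists>y. DERIV f u :> y \<and> 0 \<le> y" by blast
  qed
  then show ?thesis by (simp add: f_def)
qed

lemma K_ineq:
  fixes p t :: real
  assumes p: "1 \<le> p" "p \<le> 2" and t: "0 \<le> t" "t \<le> 1"
  shows "2 + p * (p - 1) * t^2 \<le> (1 + t) powr p + (1 - t) powr p"
proof -
  define h where "h u = (1 + u) powr p + (1 - u) powr p - p * (p - 1) * u^2" for u :: real
  have "h 0 \<le> h t"
  proof (rule DERIV_nonneg_imp_increasing_open[OF t(1)])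
    fix u assume u: "0 < u" "u < t"
    have d0: "DERIV (\<lambda>u. u^2) u :> 2 * u"
      by (auto intro!: derivative_eq_intros)
    have d: "DERIV h u :> p * (1 + u) powr (p - 1) + (- (p * (1 - u) powr (p - 1))) - p * (p - 1) * (2 * u)"
      unfolding h_def using u t
      by (intro DERIV_diff DERIV_add deriv_plus deriv_minus DERIV_cmult d0) auto
    have "2 * (p - 1) * u \<le> (1 + u) powr (p - 1) - (1 - u) powr (p - 1)"
      using p u t by (intro phi_nonneg) auto
    then have "0 \<le> p * ((1 + u) powr (p - 1) - (1 - u) powr (p - 1) - 2 * (p - 1) * u)" using p by simp
    then have "0 \<le> p * (1 + u) powr (p - 1) + (- (p * (1 - u) powr (p - 1))) - p * (p - 1) * (2 * u)"
      by (simp add: algebra_simps)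
    with d show "\<exists>y. DERIV h u :> y \<and> 0 \<le> y" by blast
  next
    show "continuous_on {0..t} h" unfolding h_def using p t
      by (intro continuous_intros continuous_on_powr') auto
  qed
  then show ?thesis by (simp add: h_def)
qed



lemma two_point_aux:
  fixes p \<alpha> \<beta> :: real
  assumes p: "1 \<le> p" "p \<le> 2" and ab: "0 \<le> \<beta>" "\<beta> \<le> \<alpha>" "0 < \<alpha>"
  shows "2 * (\<alpha>^2 + (p - 1) * \<beta>^2) powr (p / 2) \<le> (\<alpha> + \<beta>) powr p + (\<alpha> - \<beta>) powr p"
    and "2 * (\<beta>^2 + (p - 1) * \<alpha>^2) powr (p / 2) \<le> (\<alpha> + \<beta>) powr p + (\<alpha> - \<beta>) powr p"
proof -
  define t where "t = \<beta> / \<alpha>"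
  have t: "0 \<le> t" "t \<le> 1" using ab by (auto simp: t_def)
  have bt: "\<beta> = \<alpha> * t" using ab by (simp add: t_def)
  have s1: "\<alpha> + \<beta> = \<alpha> * (1 + t)" using bt by (simp add: algebra_simps)
  have s2: "\<alpha> - \<beta> = \<alpha> * (1 - t)" using bt by (simp add: algebra_simps)
  have "(\<alpha> + \<beta>) powr p = \<alpha> powr p * (1 + t) powr p"
    unfolding s1 using ab t by (simp add: powr_mult)
  moreover have "(\<alpha> - \<beta>) powr p = \<alpha> powr p * (1 - t) powr p"
    unfolding s2 using ab t by (simp add: powr_mult)
  ultimately have sum: "(\<alpha> + \<beta>) powr p + (\<alpha> - \<beta>) powr p = \<alpha> powr p * ((1 + t) powr p + (1 - t) powr p)"
    by (simp add: distrib_left)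
  have ap: "0 < \<alpha> powr p" using ab by simp
  have K: "\<alpha> powr p * (2 + p * (p - 1) * t^2) \<le> (\<alpha> + \<beta>) powr p + (\<alpha> - \<beta>) powr p"
    unfolding sum using K_ineq[OF p t] ap by (intro mult_left_mono) auto
  have a2: "(\<alpha>^2) powr (p / 2) = \<alpha> powr p"
  proof -
    have "\<alpha>^2 = \<alpha> powr 2" using ab by (simp add: powr_numeral)
    then have "(\<alpha>^2) powr (p / 2) = \<alpha> powr (2 * (p / 2))" by (simp add: powr_powr)
    then show ?thesis by simp
  qed
  show "2 * (\<alpha>^2 + (p - 1) * \<beta>^2) powr (p / 2) \<le> (\<alpha> + \<beta>) powr p + (\<alpha> - \<beta>) powr p"
  proof -
    have e: "\<alpha>^2 + (p - 1) * \<beta>^2 = \<alpha>^2 * (1 + (p - 1) * t^2)"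
      unfolding bt by (simp add: algebra_simps power2_eq_square)
    have "(\<alpha>^2 + (p - 1) * \<beta>^2) powr (p / 2) = (\<alpha>^2) powr (p / 2) * (1 + (p - 1) * t^2) powr (p / 2)"
      unfolding e using p t by (simp add: powr_mult)
    also have "\<dots> = \<alpha> powr p * (1 + (p - 1) * t^2) powr (p / 2)" by (simp only: a2)
    also have "\<dots> \<le> \<alpha> powr p * (1 + (p / 2) * ((1 + (p - 1) * t^2) - 1))"
      using p t ap by (intro mult_left_mono bern_le) auto
    finally have "2 * (\<alpha>^2 + (p - 1) * \<beta>^2) powr (p / 2) \<le> \<alpha> powr p * (2 + p * (p - 1) * t^2)"
      by (simp add: algebra_simps)
    with K show ?thesis by linarith
  qed
  show "2 * (\<beta>^2 + (p - 1) * \<alpha>^2) powr (p / 2) \<le> (\<alpha> + \<beta>) powr p + (\<alpha> - \<beta>) powr p"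
  proof -
    have e: "\<beta>^2 + (p - 1) * \<alpha>^2 = \<alpha>^2 * (t^2 + (p - 1))"
      unfolding bt by (simp add: algebra_simps power2_eq_square)
    have "(\<beta>^2 + (p - 1) * \<alpha>^2) powr (p / 2) = (\<alpha>^2) powr (p / 2) * (t^2 + (p - 1)) powr (p / 2)"
      unfolding e using p t by (simp add: powr_mult)
    also have "\<dots> = \<alpha> powr p * (t^2 + (p - 1)) powr (p / 2)" by (simp only: a2)
    also have "\<dots> \<le> \<alpha> powr p * (1 + (p / 2) * ((t^2 + (p - 1)) - 1))"
      using p t ap by (intro mult_left_mono bern_le) auto
    also have "\<dots> \<le> \<alpha> powr p * (1 + (p / 2) * ((p - 1) * t^2))"
    proof -
      have t2: "t^2 \<le> 1" using t by (simp add: power_le_one)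
      have "0 \<le> (2 - p) * (1 - t^2)" using p t2 by simp
      then have "(t^2 + (p - 1)) - 1 \<le> (p - 1) * t^2" by (simp add: algebra_simps)
      then have "(p / 2) * ((t^2 + (p - 1)) - 1) \<le> (p / 2) * ((p - 1) * t^2)"
        using p by (intro mult_left_mono) auto
      then show ?thesis using ap by (intro mult_left_mono) auto
    qed
    finally have "2 * (\<beta>^2 + (p - 1) * \<alpha>^2) powr (p / 2) \<le> \<alpha> powr p * (2 + p * (p - 1) * t^2)"
      by (simp add: algebra_simps)
    with K show ?thesis by linarith
  qed
qed

lemma two_point:
  fixes p f g :: real
  assumes p: "1 \<le> p" "p \<le> 2"
  shows "2 * (f^2 + (p - 1) * g^2) powr (p / 2) \<le> \<bar>f + g\<bar> powr p + \<bar>f - g\<bar> powr p"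
proof -
  define \<alpha> \<beta> where "\<alpha> = \<bar>f\<bar>" and "\<beta> = \<bar>g\<bar>"
  have e: "\<bar>f + g\<bar> powr p + \<bar>f - g\<bar> powr p = (\<alpha> + \<beta>) powr p + \<bar>\<alpha> - \<beta>\<bar> powr p"
  proof -
    have "(\<bar>f + g\<bar> = \<alpha> + \<beta> \<and> \<bar>f - g\<bar> = \<bar>\<alpha> - \<beta>\<bar>) \<or>
          (\<bar>f - g\<bar> = \<alpha> + \<beta> \<and> \<bar>f + g\<bar> = \<bar>\<alpha> - \<beta>\<bar>)"
      unfolding \<alpha>_def \<beta>_def by arith
    then show ?thesis by auto
  qed
  have f2: "f^2 = \<alpha>^2" "g^2 = \<beta>^2" by (simp_all add: \<alpha>_def \<beta>_def)
  have ge: "0 \<le> \<alpha>" "0 \<le> \<beta>" by (simp_all add: \<alpha>_def \<beta>_def)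
  show ?thesis
  proof (cases "\<alpha> = 0 \<and> \<beta> = 0")
    case True then show ?thesis using f2 by (simp add: \<alpha>_def \<beta>_def)
  next
    case False
    show ?thesis
    proof (cases "\<beta> \<le> \<alpha>")
      case True
      then have "0 < \<alpha>" "\<bar>\<alpha> - \<beta>\<bar> = \<alpha> - \<beta>" using False ge by auto
      then show ?thesis unfolding e f2 using True p two_point_aux(1)[of p \<beta> \<alpha>] ge
        by simp
    next
      case nle: False
      then have "0 < \<beta>" "\<bar>\<alpha> - \<beta>\<bar> = \<beta> - \<alpha>" using ge by auto
      then show ?thesis unfolding e f2 using nle p two_point_aux(2)[of p \<alpha> \<beta>] ge
        by (simp add: add.commute)
    qed
  qed
qed



lemma conc_split:
  fixes l r A B :: real
  assumes l: "0 < l" "l < 1" and r: "0 \<le> r" "r \<le> 1" and AB: "0 \<le> A" "0 \<le> B"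
  shows "l powr (1 - r) * A powr r + (1 - l) powr (1 - r) * B powr r \<le> (A + B) powr r"
proof (cases "A + B = 0")
  case True
  then have "A = 0" "B = 0" using AB by auto
  then show ?thesis by simp
next
  case False
  define M where "M = A + B"
  have M: "0 < M" using False AB by (simp add: M_def)
  have key: "c powr (1 - r) * X powr r \<le> M powr r * (c + r * (X / M - c))"
    if c: "0 < c" and X: "0 \<le> X" for c X :: real
  proof -
    have "(X / (c * M)) powr r \<le> 1 + r * (X / (c * M) - 1)"
      using r X c M by (intro bern_le) auto
    then have "c * M powr r * (X / (c * M)) powr r \<le> c * M powr r * (1 + r * (X / (c * M) - 1))"
      using c M by (intro mult_left_mono) auto
    moreover have "c * M powr r * (X / (c * M)) powr r = c powr (1 - r) * X powr r"
      using c M X by (simp add: powr_divide powr_mult powr_diff)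
    moreover have "c * M powr r * (1 + r * (X / (c * M) - 1)) = M powr r * (c + r * (X / M - c))"
      using c M by (simp add: field_simps)
    ultimately show ?thesis by simp
  qed
  have "l powr (1 - r) * A powr r + (1 - l) powr (1 - r) * B powr r
        \<le> M powr r * (l + r * (A / M - l)) + M powr r * ((1 - l) + r * (B / M - (1 - l)))"
    using key[of l A] key[of "1 - l" B] l AB by linarith
  also have "\<dots> = M powr r * (1 + r * ((A + B) / M - 1))" by (simp add: algebra_simps add_divide_distrib)
  also have "\<dots> = M powr r" using M by (simp add: M_def)
  finally show ?thesis by (simp add: M_def)
qed

lemma convex_pow:
  fixes p u v :: real
  assumes p: "1 \<le> p"
  shows "\<bar>u + v\<bar> powr p \<le> 2 powr (p - 1) * (\<bar>u\<bar> powr p + \<bar>v\<bar> powr p)"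
proof (cases "\<bar>u\<bar> + \<bar>v\<bar> = 0")
  case True
  then have "u = 0" "v = 0" by auto
  then show ?thesis by simp
next
  case False
  define M where "M = (\<bar>u\<bar> + \<bar>v\<bar>) / 2"
  have M: "0 < M" using False by (simp add: M_def)
  have key: "M powr p * (1 + p * (X / M - 1)) \<le> X powr p" if X: "0 \<le> X" for X :: real
  proof -
    have "M powr p * (1 + p * (X / M - 1)) \<le> M powr p * (X / M) powr p"
      using bern_ge[OF p, of "X / M"] X M by (intro mult_left_mono) auto
    also have "\<dots> = X powr p" using X M by (simp add: powr_divide)
    finally show ?thesis .
  qed
  have "M powr p * (1 + p * (\<bar>u\<bar> / M - 1)) + M powr p * (1 + p * (\<bar>v\<bar> / M - 1)) \<le> \<bar>u\<bar> powr p + \<bar>v\<bar> powr p"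
    using key[of "\<bar>u\<bar>"] key[of "\<bar>v\<bar>"] by simp
  moreover have "M powr p * (1 + p * (\<bar>u\<bar> / M - 1)) + M powr p * (1 + p * (\<bar>v\<bar> / M - 1)) = 2 * M powr p"
  proof -
    have "(\<bar>u\<bar> / M - 1) + (\<bar>v\<bar> / M - 1) = 0" using M by (simp add: M_def field_simps)
    moreover have gen: "c * (1 + p * a) + c * (1 + p * b) = 2 * c" if "a + b = 0" for c a b :: real
    proof -
      have "b = - a" using that by simp
      then show ?thesis by (simp add: algebra_simps)
    qed
    ultimately show ?thesis by blast
  qed
  ultimately have h: "2 * M powr p \<le> \<bar>u\<bar> powr p + \<bar>v\<bar> powr p" by simp
  have "\<bar>u + v\<bar> powr p \<le> (2 * M) powr p"
    using M p abs_triangle_ineq[of u v] by (intro powr_mono2) (auto simp: M_def)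
  also have "\<dots> = 2 powr (p - 1) * (2 * M powr p)"
    using M by (simp add: powr_mult powr_diff)
  also have "\<dots> \<le> 2 powr (p - 1) * (\<bar>u\<bar> powr p + \<bar>v\<bar> powr p)"
    using h by (intro mult_left_mono) auto
  finally show ?thesis .
qed

lemma pointwise_main:
  fixes p l u v :: real
  assumes p: "1 \<le> p" "p \<le> 2" and l: "0 < l" "l < 1"
  shows "l powr (1 - p / 2) * \<bar>u + v\<bar> powr p + (1 - l) powr (1 - p / 2) * (p - 1) powr (p / 2) * \<bar>u - v\<bar> powr p
         \<le> 2 powr (p - 1) * (\<bar>u\<bar> powr p + \<bar>v\<bar> powr p)"
proof -
  define f g where "f = (u + v) / 2" and "g = (u - v) / 2"
  have fg: "f + g = u" "f - g = v" by (simp_all add: f_def g_def field_simps)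
  have tp: "2 * (f^2 + (p - 1) * g^2) powr (p / 2) \<le> \<bar>u\<bar> powr p + \<bar>v\<bar> powr p"
    using two_point[OF p, of f g] by (simp add: fg)
  have cs: "l powr (1 - p / 2) * (f^2) powr (p / 2) + (1 - l) powr (1 - p / 2) * ((p - 1) * g^2) powr (p / 2)
            \<le> (f^2 + (p - 1) * g^2) powr (p / 2)"
    using p l by (intro conc_split) auto
  have sq: "(x^2) powr (p / 2) = \<bar>x\<bar> powr p" for x :: real
  proof -
    have "(x^2) powr (p / 2) = (\<bar>x\<bar> powr 2) powr (p / 2)"
    proof (cases "x = 0")
      case False
      have "x^2 = \<bar>x\<bar>^2" by simp
      also have "\<dots> = \<bar>x\<bar> powr 2" using False by (simp add: powr_numeral)
      finally show ?thesis by simp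
    qed simp
    also have "\<dots> = \<bar>x\<bar> powr p" by (subst powr_powr) simp
    finally show ?thesis .
  qed
  have f2: "\<bar>f\<bar> powr p = \<bar>u + v\<bar> powr p / 2 powr p"
    by (simp add: f_def powr_divide)
  have g2: "((p - 1) * g^2) powr (p / 2) = (p - 1) powr (p / 2) * (\<bar>u - v\<bar> powr p / 2 powr p)"
    using p by (simp add: powr_mult sq g_def powr_divide)
  have "l powr (1 - p / 2) * (\<bar>u + v\<bar> powr p / 2 powr p) + (1 - l) powr (1 - p / 2) * ((p - 1) powr (p / 2) * (\<bar>u - v\<bar> powr p / 2 powr p))
        \<le> (\<bar>u\<bar> powr p + \<bar>v\<bar> powr p) / 2"
  proof -
    have "l powr (1 - p / 2) * (\<bar>u + v\<bar> powr p / 2 powr p) + (1 - l) powr (1 - p / 2) * ((p - 1) powr (p / 2) * (\<bar>u - v\<bar> powr p / 2 powr p))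
        \<le> (f^2 + (p - 1) * g^2) powr (p / 2)"
      using cs by (simp only: sq f2 g2)
    moreover have gen: "X \<le> Y \<Longrightarrow> 2 * Y \<le> Z \<Longrightarrow> X \<le> Z / 2" for X Y Z :: real by linarith
    ultimately show ?thesis using tp by blast
  qed
  then have "(l powr (1 - p / 2) * \<bar>u + v\<bar> powr p + (1 - l) powr (1 - p / 2) * (p - 1) powr (p / 2) * \<bar>u - v\<bar> powr p) / 2 powr p
        \<le> (\<bar>u\<bar> powr p + \<bar>v\<bar> powr p) / 2"
    by (simp add: field_simps)
  then have "l powr (1 - p / 2) * \<bar>u + v\<bar> powr p + (1 - l) powr (1 - p / 2) * (p - 1) powr (p / 2) * \<bar>u - v\<bar> powr p
        \<le> 2 powr p * ((\<bar>u\<bar> powr p + \<bar>v\<bar> powr p) / 2)"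
    by (simp add: divide_le_eq mult.commute)
  also have "\<dots> = 2 powr (p - 1) * (\<bar>u\<bar> powr p + \<bar>v\<bar> powr p)"
    by (simp add: powr_diff)
  finally show ?thesis .
qed



lemma final_geom:
  fixes A B P :: real
  assumes "0 < P" "0 \<le> A" "A^2 + B^2 \<le> P^2"
  shows "2 * A / P + B^2 / P^2 \<le> 2"
proof -
  define c where "c = P - B^2 / (2 * P)"
  have B2: "B^2 \<le> P^2" using assms by (smt (verit) zero_le_power2)
  have c0: "0 \<le> c"
  proof -
    have "B^2 / (2 * P) \<le> P^2 / (2 * P)" using B2 assms by (intro divide_right_mono) auto
    also have "\<dots> = P / 2" using assms by (simp add: power2_eq_square)
    finally show ?thesis unfolding c_def using assms by linarith
  qed
  have "c^2 = P^2 - B^2 + (B^2)^2 / (4 * P^2)"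
    unfolding c_def using assms by (simp add: power2_eq_square field_simps)
  moreover have "0 \<le> (B^2)^2 / (4 * P^2)" by simp
  ultimately have "A^2 \<le> c^2" using assms by linarith
  then have "A \<le> c" using c0 assms by (simp add: power2_le_iff_abs_le)
  then have "2 * A / P \<le> 2 * c / P" using assms by (simp add: divide_right_mono)
  also have "2 * c / P = 2 - B^2 / P^2" unfolding c_def using assms by (simp add: field_simps power2_eq_square)
  finally show ?thesis by simp
qed

lemma real_final:
  fixes p P a b :: real
  assumes p: "1 < p" "p \<le> 2" and P: "0 < P" and ab: "0 \<le> a" "0 \<le> b"
    and H: "\<And>l. 0 < l \<Longrightarrow> l < 1 \<Longrightarrow>
       l powr (1 - p / 2) * a powr p + (1 - l) powr (1 - p / 2) * (p - 1) powr (p / 2) * b powr p \<le> (2 * P) powr p"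
    and Ha: "a \<le> 2 * P" and Hb: "b \<le> 2 * P"
  shows "a / P + (p - 1) / 4 * b^2 / P^2 \<le> 2"
proof -
  define q where "q = p - 1"
  have q: "0 < q" "q \<le> 1" using p by (auto simp: q_def)
  define A B where "A = a / 2" and "B = sqrt q * b / 2"
  have AB: "0 \<le> A" "0 \<le> B" using ab q by (auto simp: A_def B_def)
  have B2: "B^2 = q * b^2 / 4" using q by (simp add: B_def power_mult_distrib power_divide)
  have goal_eq: "a / P + (p - 1) / 4 * b^2 / P^2 = 2 * A / P + B^2 / P^2"
    by (simp add: A_def B2 q_def)
  have "A^2 + B^2 \<le> P^2"
  proof (cases "A = 0 \<or> B = 0")
    case True
    then show ?thesis
    proof
      assume "A = 0"
      have "B \<le> b / 2"
      proof -
        have "sqrt q \<le> 1" using q by simp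
        then have "sqrt q * b \<le> 1 * b" using ab by (intro mult_right_mono) auto
        then show ?thesis by (simp add: B_def)
      qed
      then have "B \<le> P" using Hb by simp
      then have "B^2 \<le> P^2" using AB by (intro power_mono) auto
      with \<open>A = 0\<close> show ?thesis by simp
    next
      assume "B = 0"
      have "A \<le> P" using Ha by (simp add: A_def)
      then have "A^2 \<le> P^2" using AB by (intro power_mono) auto
      with \<open>B = 0\<close> show ?thesis by simp
    qed
  next
    case False
    then have Ap: "0 < A" and Bp: "0 < B" using AB by auto
    define D where "D = A^2 + B^2"
    have D: "0 < D" using Ap by (simp add: D_def add_pos_nonneg)
    define l where "l = A^2 / D"
    have l: "0 < l" "l < 1" using Ap Bp D by (auto simp: l_def D_def)
    have "A^2 / D + B^2 / D = D / D" by (simp only: add_divide_distrib[symmetric] D_def)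
    also have "D / D = 1" using D by simp
    finally have "A^2 / D + B^2 / D = 1" .
    then have l1: "1 - l = B^2 / D" by (simp add: l_def)
    have ap: "a powr p = 2 powr p * A powr p" using ab by (simp add: A_def powr_divide)
    have bp: "(p - 1) powr (p / 2) * b powr p = 2 powr p * B powr p"
    proof -
      have "B powr p = sqrt q powr p * b powr p / 2 powr p" using q ab by (simp add: B_def powr_divide powr_mult)
      moreover have "sqrt q powr p = q powr (p / 2)"
      proof -
        have "sqrt q = q powr (1/2)" using q by (simp add: powr_half_sqrt)
        then have "sqrt q powr p = q powr (1/2 * p)" by (simp only: powr_powr)
        then show ?thesis by simp
      qed
      ultimately show ?thesis by (simp add: q_def)
    qed
    have sq: "X powr (1 - p / 2) * X2 powr p = X2^2" if "X = X2^2" "0 < X2" for X X2 :: real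
    proof -
      have "X = X2 powr 2" using that by (simp add: powr_numeral)
      then have "X powr (1 - p / 2) = X2 powr (2 * (1 - p / 2))" by (simp only: powr_powr)
      then have "X powr (1 - p / 2) * X2 powr p = X2 powr (2 * (1 - p / 2) + p)" by (simp only: powr_add)
      also have "2 * (1 - p / 2) + p = 2" by simp
      finally show ?thesis using that by (simp add: powr_numeral)
    qed
    have t1: "l powr (1 - p / 2) * A powr p = A^2 / D powr (1 - p / 2)"
    proof -
      have "l powr (1 - p / 2) = (A^2) powr (1 - p / 2) / D powr (1 - p / 2)" using D by (simp add: l_def powr_divide)
      then show ?thesis using sq[of "A^2" A] Ap by simp
    qed
    have t2: "(1 - l) powr (1 - p / 2) * B powr p = B^2 / D powr (1 - p / 2)"
    proof -
      have "(1 - l) powr (1 - p / 2) = (B^2) powr (1 - p / 2) / D powr (1 - p / 2)" using D by (simp add: l1 powr_divide)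
      then show ?thesis using sq[of "B^2" B] Bp by simp
    qed
    have "2 powr p * (l powr (1 - p / 2) * A powr p + (1 - l) powr (1 - p / 2) * B powr p) \<le> 2 powr p * P powr p"
    proof -
      have "l powr (1 - p / 2) * a powr p + (1 - l) powr (1 - p / 2) * (p - 1) powr (p / 2) * b powr p
          = l powr (1 - p / 2) * a powr p + (1 - l) powr (1 - p / 2) * ((p - 1) powr (p / 2) * b powr p)"
        by (simp only: mult.assoc)
      also have "\<dots> = 2 powr p * (l powr (1 - p / 2) * A powr p + (1 - l) powr (1 - p / 2) * B powr p)"
        unfolding ap bp by (simp only: ring_distribs mult.left_commute)
      finally have e: "l powr (1 - p / 2) * a powr p + (1 - l) powr (1 - p / 2) * (p - 1) powr (p / 2) * b powr p
          = 2 powr p * (l powr (1 - p / 2) * A powr p + (1 - l) powr (1 - p / 2) * B powr p)" .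
      have "(2 * P) powr p = 2 powr p * P powr p" using P by (simp add: powr_mult)
      then show ?thesis using H[OF l] e by simp
    qed
    then have "l powr (1 - p / 2) * A powr p + (1 - l) powr (1 - p / 2) * B powr p \<le> P powr p" by simp
    also have "l powr (1 - p / 2) * A powr p + (1 - l) powr (1 - p / 2) * B powr p = D powr (p / 2)"
    proof -
      have "l powr (1 - p / 2) * A powr p + (1 - l) powr (1 - p / 2) * B powr p = D / D powr (1 - p / 2)"
        unfolding t1 t2 by (simp add: D_def add_divide_distrib)
      also have "\<dots> = D powr (p / 2)"
      proof -
        have "D powr (1 - (1 - p / 2)) = D powr 1 / D powr (1 - p / 2)" by (simp only: powr_diff)
        then show ?thesis using D by simp
      qed
      finally show ?thesis .
    qed
    finally have "D powr (p / 2) \<le> P powr p" .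
    then have "(D powr (p / 2)) powr (2 / p) \<le> (P powr p) powr (2 / p)"
      using D p by (intro powr_mono2) auto
    then have "D \<le> P powr 2" using D P p by (simp add: powr_powr)
    then show ?thesis using P by (simp add: D_def powr_numeral)
  qed
  then show ?thesis unfolding goal_eq using final_geom P AB by blast
qed



lemma Lp_norm_finite:
  assumes "(\<integral>\<^sup>+ z. ennreal (\<bar>f z\<bar> powr p) \<partial>M) = ennreal X" "0 \<le> X"
  shows "Lp_norm M p f = ennreal (X powr (1 / p))"
  using assms by (simp add: Lp_norm_def Let_def)

lemma core:
  fixes M :: "'a measure" and p P X Y :: real and x y :: "'a \<Rightarrow> real"
  assumes p: "1 < p" "p \<le> 2" and P: "0 < P"
    and mx: "x \<in> borel_measurable M" and my: "y \<in> borel_measurable M"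
    and Ix: "(\<integral>\<^sup>+ z. ennreal (\<bar>x z\<bar> powr p) \<partial>M) = ennreal X" and X: "0 \<le> X" "X \<le> P powr p"
    and Iy: "(\<integral>\<^sup>+ z. ennreal (\<bar>y z\<bar> powr p) \<partial>M) = ennreal Y" and Y: "0 \<le> Y" "Y \<le> P powr p"
  shows "Lp_norm M p (\<lambda>z. x z + y z) / ennreal P
           + ennreal ((p - 1) / 4) * ((Lp_norm M p (\<lambda>z. x z - y z))\<^sup>2 / (ennreal P)\<^sup>2) \<le> 2"
proof -
  define r where "r = 1 - p / 2"
  define c2 where "c2 = (p - 1) powr (p / 2)"
  define K where "K = 2 powr (p - 1)"
  have K0: "0 \<le> K" by (simp add: K_def)
  define U' where "U' = (\<integral>\<^sup>+ z. ennreal (\<bar>x z + y z\<bar> powr p) \<partial>M)"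
  define V' where "V' = (\<integral>\<^sup>+ z. ennreal (\<bar>x z - y z\<bar> powr p) \<partial>M)"
  have meas: "(\<lambda>z. ennreal (\<bar>f z\<bar> powr p)) \<in> borel_measurable M" if "f \<in> borel_measurable M" for f
    using that by measurable
  have mxy: "(\<lambda>z. x z + y z) \<in> borel_measurable M" "(\<lambda>z. x z - y z) \<in> borel_measurable M"
    using mx my by measurable
  have RHS: "(\<integral>\<^sup>+ z. ennreal (K * (\<bar>x z\<bar> powr p + \<bar>y z\<bar> powr p)) \<partial>M) = ennreal (K * (X + Y))"
  proof -
    have "(\<integral>\<^sup>+ z. ennreal (K * (\<bar>x z\<bar> powr p + \<bar>y z\<bar> powr p)) \<partial>M)
        = (\<integral>\<^sup>+ z. ennreal K * (ennreal (\<bar>x z\<bar> powr p) + ennreal (\<bar>y z\<bar> powr p)) \<partial>M)"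
      using K0 by (simp add: ennreal_mult)
    also have "\<dots> = ennreal K * ((\<integral>\<^sup>+ z. ennreal (\<bar>x z\<bar> powr p) \<partial>M) + (\<integral>\<^sup>+ z. ennreal (\<bar>y z\<bar> powr p) \<partial>M))"
      using meas[OF mx] meas[OF my] by (simp add: nn_integral_cmult nn_integral_add)
    also have "\<dots> = ennreal (K * (X + Y))" using Ix Iy X Y K0 by (simp add: ennreal_mult)
    finally show ?thesis .
  qed
  have conv: "U' \<le> ennreal (K * (X + Y))" "V' \<le> ennreal (K * (X + Y))"
  proof -
    show "U' \<le> ennreal (K * (X + Y))" unfolding U'_def RHS[symmetric]
      using p convex_pow[of p] by (intro nn_integral_mono) (simp add: K_def)
    show "V' \<le> ennreal (K * (X + Y))" unfolding V'_def RHS[symmetric]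
      using p convex_pow[of p "x z" "- y z" for z] by (intro nn_integral_mono) (simp add: K_def)
  qed
  obtain U where U: "U' = ennreal U" "0 \<le> U" "U \<le> K * (X + Y)"
    using conv(1) by (metis ennreal_le_iff2 le_ennreal_iff K0 X(1) Y(1) add_nonneg_nonneg mult_nonneg_nonneg)
  obtain V where V: "V' = ennreal V" "0 \<le> V" "V \<le> K * (X + Y)"
    using conv(2) by (metis ennreal_le_iff2 le_ennreal_iff K0 X(1) Y(1) add_nonneg_nonneg mult_nonneg_nonneg)
  have KXY: "K * (X + Y) \<le> (2 * P) powr p"
  proof -
    have "K * (X + Y) \<le> K * (2 * P powr p)" using X Y K0 by (intro mult_left_mono) auto
    also have "\<dots> = (2 * P) powr p" using P by (simp add: K_def powr_mult powr_diff)
    finally show ?thesis .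
  qed
  define A B where "A = U powr (1 / p)" and "B = V powr (1 / p)"
  have AB0: "0 \<le> A" "0 \<le> B" by (simp_all add: A_def B_def)
  have Ap: "A powr p = U" using U p by (simp add: A_def powr_powr)
  have Bp: "B powr p = V" using V p by (simp add: B_def powr_powr)
  have H: "l powr (1 - p / 2) * A powr p + (1 - l) powr (1 - p / 2) * (p - 1) powr (p / 2) * B powr p \<le> (2 * P) powr p"
    if l: "0 < l" "l < 1" for l
  proof -
    have "(\<integral>\<^sup>+ z. ennreal (l powr r * \<bar>x z + y z\<bar> powr p + (1 - l) powr r * c2 * \<bar>x z - y z\<bar> powr p) \<partial>M)
        \<le> (\<integral>\<^sup>+ z. ennreal (K * (\<bar>x z\<bar> powr p + \<bar>y z\<bar> powr p)) \<partial>M)"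
      using p l pointwise_main[of p l] by (intro nn_integral_mono ennreal_leI) (simp add: K_def r_def c2_def)
    also have "\<dots> = ennreal (K * (X + Y))" by (rule RHS)
    also have "(\<integral>\<^sup>+ z. ennreal (l powr r * \<bar>x z + y z\<bar> powr p + (1 - l) powr r * c2 * \<bar>x z - y z\<bar> powr p) \<partial>M)
        = (\<integral>\<^sup>+ z. ennreal (l powr r) * ennreal (\<bar>x z + y z\<bar> powr p) + ennreal ((1 - l) powr r * c2) * ennreal (\<bar>x z - y z\<bar> powr p) \<partial>M)"
      by (intro nn_integral_cong) (simp add: ennreal_mult c2_def)
    also have "\<dots> = ennreal (l powr r) * U' + ennreal ((1 - l) powr r * c2) * V'"
      using meas[OF mxy(1)] meas[OF mxy(2)] by (simp add: nn_integral_cmult nn_integral_add U'_def V'_def)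
    also have "\<dots> = ennreal (l powr r * U + (1 - l) powr r * c2 * V)"
      using U V by (simp add: ennreal_mult c2_def)
    finally have "l powr r * U + (1 - l) powr r * c2 * V \<le> K * (X + Y)"
      using K0 X Y by (subst (asm) ennreal_le_iff) auto
    then show ?thesis using KXY by (simp add: Ap Bp r_def c2_def)
  qed
  have Ha: "A \<le> 2 * P"
  proof -
    have "A \<le> ((2 * P) powr p) powr (1 / p)" unfolding A_def using U KXY p by (intro powr_mono2) auto
    then show ?thesis using P p by (simp add: powr_powr)
  qed
  have Hb: "B \<le> 2 * P"
  proof -
    have "B \<le> ((2 * P) powr p) powr (1 / p)" unfolding B_def using V KXY p by (intro powr_mono2) auto
    then show ?thesis using P p by (simp add: powr_powr)
  qed
  have fin: "A / P + (p - 1) / 4 * B^2 / P^2 \<le> 2"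
    using real_final[OF p P AB0 H Ha Hb] by blast
  have N1: "Lp_norm M p (\<lambda>z. x z + y z) = ennreal A"
    using U unfolding A_def by (intro Lp_norm_finite) (auto simp: U'_def)
  have N2: "Lp_norm M p (\<lambda>z. x z - y z) = ennreal B"
    using V unfolding B_def by (intro Lp_norm_finite) (auto simp: V'_def)
  have "Lp_norm M p (\<lambda>z. x z + y z) / ennreal P
           + ennreal ((p - 1) / 4) * ((Lp_norm M p (\<lambda>z. x z - y z))\<^sup>2 / (ennreal P)\<^sup>2)
        = ennreal (A / P + (p - 1) / 4 * B^2 / P^2)"
    unfolding N1 N2 using P p AB0
    by (simp add: ennreal_power divide_ennreal ennreal_mult[symmetric] ennreal_plus[symmetric] del: ennreal_plus)
  also have "\<dots> \<le> 2" using fin by (metis ennreal_leI ennreal_numeral)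
  finally show ?thesis .
qed



lemma div_le1_imp:
  fixes N :: ennreal and P :: real
  assumes "N / ennreal P \<le> 1" "0 < P"
  shows "N \<le> ennreal P"
proof (cases N rule: ennreal_cases)
  case (real n)
  then have "ennreal (n / P) \<le> 1" using assms by (simp add: divide_ennreal)
  then have "n / P \<le> 1" by (simp add: ennreal_1[symmetric] del: ennreal_1)
  then show ?thesis using real assms by (simp add: divide_le_eq)
next
  case top
  then have "N / ennreal P = top" using assms by (simp add: ennreal_top_divide)
  then show ?thesis using assms by (simp add: top_unique)
qed

theorem theorem2p1:
  fixes M :: "'a measure" and a b :: real and \<psi> :: "real \<Rightarrow> ennreal"
    and x y :: "'a \<Rightarrow> real"
  assumes "atomless M" and "0 < emeasure M (space M)"
    and "1 < a" and "a < b" and "b \<le> 2"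
    and "\<forall>p\<in>{a<..<b}. 0 < \<psi> p"
    and "0 < (INF p\<in>{a<..<b}. \<psi> p)"
    and "x \<in> GLS M a b \<psi>" and "GLS_norm M a b \<psi> x \<le> 1"
    and "y \<in> GLS M a b \<psi>" and "GLS_norm M a b \<psi> y \<le> 1"
  shows "GLS_norm M a b \<psi> (\<lambda>z. x z + y z)
           + ennreal ((a - 1) / 4) * GLS_kappa M a b \<psi> (\<lambda>z. x z - y z) \<le> 2"
proof -
  define I where "I = {a<..<b}"
  define \<kappa> where "\<kappa> = GLS_kappa M a b \<psi> (\<lambda>z. x z - y z)"
  have Ine: "I \<noteq> {}" using assms(4) by (auto simp: I_def dest: dense)
  have mx: "x \<in> borel_measurable M" and my: "y \<in> borel_measurable M"
    using assms(8,10) by (auto simp: GLS_def)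
  have per: "Lp_norm M p (\<lambda>z. x z + y z) / \<psi> p + ennreal ((a - 1) / 4) * \<kappa> \<le> 2" if pI: "p \<in> I" for p
  proof -
    have p: "1 < p" "p \<le> 2" "a < p" using pI assms(3,5) by (auto simp: I_def)
    have kle: "\<kappa> \<le> (Lp_norm M p (\<lambda>z. x z - y z))\<^sup>2 / (\<psi> p)\<^sup>2"
      unfolding \<kappa>_def GLS_kappa_def using pI by (intro INF_lower) (simp add: I_def)
    show ?thesis
    proof (cases "\<psi> p = top")
      case True
      then have "\<kappa> = 0" using kle by (simp add: power_eq_top_ennreal)
      then show ?thesis using True by simp
    next
      case False
      then obtain P where P: "\<psi> p = ennreal P" "0 \<le> P" by (cases "\<psi> p" rule: ennreal_cases) auto
      have "0 < \<psi> p" using assms(6) pI by (auto simp: I_def)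
      then have P0: "0 < P" using P by simp
      have bound: "\<exists>X. (\<integral>\<^sup>+ z. ennreal (\<bar>f z\<bar> powr p) \<partial>M) = ennreal X \<and> 0 \<le> X \<and> X \<le> P powr p"
        if "GLS_norm M a b \<psi> f \<le> 1" for f
      proof -
        have "Lp_norm M p f / \<psi> p \<le> GLS_norm M a b \<psi> f"
          unfolding GLS_norm_def using pI by (intro SUP_upper) (simp add: I_def)
        then have "Lp_norm M p f / ennreal P \<le> 1" using that P by simp
        then have N: "Lp_norm M p f \<le> ennreal P" using P0 by (rule div_le1_imp)
        define J where "J = (\<integral>\<^sup>+ z. ennreal (\<bar>f z\<bar> powr p) \<partial>M)"
        have "J \<noteq> top"
        proof
          assume "J = top"
          then have "Lp_norm M p f = top" by (simp add: Lp_norm_def Let_def J_def)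
          then show False using N by (simp add: top_unique)
        qed
        then have J: "J = ennreal (enn2real J)" by (simp add: less_top)
        have "Lp_norm M p f = ennreal (enn2real J powr (1 / p))"
          using \<open>J \<noteq> top\<close> by (simp add: Lp_norm_def Let_def J_def)
        then have "enn2real J powr (1 / p) \<le> P" using N P0 by simp
        then have "(enn2real J powr (1 / p)) powr p \<le> P powr p" using p by (intro powr_mono2) auto
        then have "enn2real J \<le> P powr p" using p by (simp add: powr_powr)
        then show ?thesis using J by (auto simp: J_def)
      qed
      obtain X where X: "(\<integral>\<^sup>+ z. ennreal (\<bar>x z\<bar> powr p) \<partial>M) = ennreal X" "0 \<le> X" "X \<le> P powr p"
        using bound[OF assms(9)] by blast
      obtain Y where Y: "(\<integral>\<^sup>+ z. ennreal (\<bar>y z\<bar> powr p) \<partial>M) = ennreal Y" "0 \<le> Y" "Y \<le> P powr p"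
        using bound[OF assms(11)] by blast
      have C: "Lp_norm M p (\<lambda>z. x z + y z) / ennreal P
           + ennreal ((p - 1) / 4) * ((Lp_norm M p (\<lambda>z. x z - y z))\<^sup>2 / (ennreal P)\<^sup>2) \<le> 2"
        using core[OF p(1,2) P0 mx my X Y] .
      have "ennreal ((a - 1) / 4) * \<kappa> \<le> ennreal ((p - 1) / 4) * ((Lp_norm M p (\<lambda>z. x z - y z))\<^sup>2 / (ennreal P)\<^sup>2)"
        using kle P p by (intro mult_mono) auto
      then show ?thesis using C P by (metis add_left_mono order_trans)
    qed
  qed
  have "GLS_norm M a b \<psi> (\<lambda>z. x z + y z) + ennreal ((a - 1) / 4) * \<kappa>
      = (SUP p\<in>I. Lp_norm M p (\<lambda>z. x z + y z) / \<psi> p + ennreal ((a - 1) / 4) * \<kappa>)"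
    unfolding GLS_norm_def I_def[symmetric] by (rule ennreal_SUP_add_left[symmetric, OF Ine])
  also have "\<dots> \<le> 2" using per by (intro SUP_least) auto
  finally show ?thesis by (simp add: \<kappa>_def)
qed

end
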